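(* Let $n\ge2$ be an integer, $\lambda>0$, $\alpha\in(0,1)$. For $\beta\in\mathbb{R}$ let $\bar S_\beta$ be the space of radially symmetric functions $\eta$ on $\mathbb{R}^n$ with $$\|\eta\|_{\hat{},\beta}:=\sup_{y\in\mathbb{R}^n}\big\|(1+|y|)^\beta\eta\big\|_{C^{0,\alpha}(B_y(1))}<+\infty,$$ where $B_y(1)$ is the unit ball centered at $y$. Let $\eta\in\bar S_\beta$ with $\beta>\frac{n+1}{2}$. Then the equation $$h''+\frac{n-1}{r}h'+\lambda h=\eta,\qquad r=|y|,$$ has a solution $h\in\bar S_{\frac{n-1}{2}}$ satisfying $\|h\|_{\hat{},\frac{n-1}{2}}\le C\|\eta\|_{\hat{},\beta}$, with $C$ independent of $\eta$. *)

theory Defs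
  imports "HOL-Analysis.Analysis"
begin

definition radial :: "('a::real_normed_vector \<Rightarrow> real) \<Rightarrow> bool" where
  "radial f \<longleftrightarrow> (\<forall>x y. norm x = norm y \<longrightarrow> f x = f y)"

definition holder_norm :: "real \<Rightarrow> 'a::metric_space set \<Rightarrow> ('a \<Rightarrow> real) \<Rightarrow> ereal" where
  "holder_norm \<alpha> B f =
     (SUP x\<in>B. ereal \<bar>f x\<bar>) +
     (SUP p\<in>{(x, z). x \<in> B \<and> z \<in> B \<and> x \<noteq> z}. ereal (\<bar>f (fst p) - f (snd p)\<bar> / (dist (fst p) (snd p) powr \<alpha>)))"

definition wnorm :: "real \<Rightarrow> real \<Rightarrow> ('a::real_normed_vector \<Rightarrow> real) \<Rightarrow> ereal" where
  "wnorm \<alpha> \<beta> f = (SUP y. holder_norm \<alpha> (ball y 1) (\<lambda>x. (1 + norm x) powr \<beta> * f x))"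

definition Sbar :: "real \<Rightarrow> real \<Rightarrow> ('a::real_normed_vector \<Rightarrow> real) set" where
  "Sbar \<alpha> \<beta> = {f. radial f \<and> wnorm \<alpha> \<beta> f < \<infinity>}"

end

theory Submission
  imports Defs
begin

definition PI :: "nat \<Rightarrow> (real \<Rightarrow> real) \<Rightarrow> real \<Rightarrow> real" where
  "PI N F t = integral {0..t} (\<lambda>s. s^(N-1) * F s)"
definition QI :: "nat \<Rightarrow> (real \<Rightarrow> real) \<Rightarrow> real \<Rightarrow> real" where
  "QI N F t = (if t \<le> 0 then 0 else PI N F t / t^(N-1))"
definition VI :: "nat \<Rightarrow> (real \<Rightarrow> real) \<Rightarrow> real \<Rightarrow> real" where
  "VI N F r = integral {0..r} (QI N F)"

lemma PI_deriv_within: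
  assumes F: "continuous_on UNIV F" and t: "t \<in> {0..b}"
  shows "(PI N F has_real_derivative t^(N-1) * F t) (at t within {0..b})"
  unfolding PI_def
  by (rule integral_has_real_derivative[OF _ t]) (auto intro!: continuous_intros continuous_on_subset[OF F])

lemma PI_deriv:
  assumes F: "continuous_on UNIV F" and t: "t > 0"
  shows "(PI N F has_real_derivative t^(N-1) * F t) (at t)"
proof -
  have "(PI N F has_real_derivative t^(N-1) * F t) (at t within {0..t+1})"
    using PI_deriv_within[OF F, of t "t+1"] t by auto
  thus ?thesis using at_within_Icc_at[of 0 t "t+1"] t by simp
qed

lemma PI_bound:
  assumes F: "continuous_on UNIV F" and G: "continuous_on {0..t} G" and t: "t \<ge> 0"
    and le: "\<And>s. s \<in> {0..t} \<Longrightarrow> \<bar>F s\<bar> \<le> G s"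
  shows "\<bar>PI N F t\<bar> \<le> t^(N-1) * integral {0..t} G"
proof -
  have "\<bar>PI N F t\<bar> \<le> integral {0..t} (\<lambda>s. t^(N-1) * G s)"
    unfolding PI_def real_norm_def[symmetric]
  proof (rule integral_norm_bound_integral)
    show "(\<lambda>s. s ^ (N - 1) * F s) integrable_on {0..t}"
      by (rule integrable_continuous_interval) (auto intro!: continuous_intros continuous_on_subset[OF F])
    show "(\<lambda>s. t ^ (N - 1) * G s) integrable_on {0..t}"
      by (rule integrable_continuous_interval) (auto intro!: continuous_intros G)
    fix s assume s: "s \<in> {0..t}"
    have "norm (s ^ (N - 1) * F s) = s^(N-1) * \<bar>F s\<bar>" using s by (simp add: abs_mult)
    also have "\<dots> \<le> t^(N-1) * G s"
      using s le[OF s] by (intro mult_mono power_mono) auto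
    finally show "norm (s ^ (N - 1) * F s) \<le> t ^ (N - 1) * G s" .
  qed
  also have "\<dots> = t^(N-1) * integral {0..t} G" by simp
  finally show ?thesis .
qed

lemma QI_bound:
  assumes F: "continuous_on UNIV F" and G: "continuous_on {0..t} G" and t: "t \<ge> 0"
    and le: "\<And>s. s \<in> {0..t} \<Longrightarrow> \<bar>F s\<bar> \<le> G s"
    and Gnn: "\<And>s. s \<in> {0..t} \<Longrightarrow> 0 \<le> G s"
  shows "\<bar>QI N F t\<bar> \<le> integral {0..t} G"
proof (cases "t \<le> 0")
  case True
  then have "t = 0" using t by simp
  then show ?thesis by (simp add: QI_def)
next
  case False
  then have tp: "t > 0" by simp
  have "\<bar>QI N F t\<bar> = \<bar>PI N F t\<bar> / t^(N-1)" using tp by (simp add: QI_def abs_div)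
  also have "\<dots> \<le> t^(N-1) * integral {0..t} G / t^(N-1)"
    using PI_bound[OF F G t le] tp by (intro divide_right_mono) auto
  also have "\<dots> = integral {0..t} G" using tp by simp
  finally show ?thesis .
qed

lemma QI_deriv:
  assumes F: "continuous_on UNIV F" and t: "t > 0"
  shows "(QI N F has_real_derivative F t - real (N-1) / t * QI N F t) (at t)"
proof -
  have nz: "t^(N-1) \<noteq> 0" using t by simp
  note d = DERIV_quotient[OF PI_deriv[OF F t, of N] DERIV_pow[of "N-1" t UNIV] nz]
  have eq: "(t^(N-1) * F t * t^(N-1) - real (N-1) * t^(N-1-Suc 0) * PI N F t) / ((t^(N-1))^Suc (Suc 0))
     = F t - real (N-1) / t * QI N F t"
  proof (cases "N - 1 = 0")
    case True thus ?thesis by simp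
  next
    case False
    then have tp: "t^(N-1) = t * t^(N-1-Suc 0)" by (cases "N - 1") auto
    have pp: "t^(N-1-Suc 0) > 0" using t by simp
    have alg: "\<And>p f c a. p > 0 \<Longrightarrow> ((t*p)*f*(t*p) - c*p*a)/((t*p)^Suc (Suc 0)) = f - c/t*(a/(t*p))"
      using t by (simp add: field_simps power2_eq_square)
    show ?thesis unfolding QI_def using t alg[OF pp] by (simp only: tp) simp
  qed
  show ?thesis
    by (rule has_field_derivative_transform_within_open[OF d[unfolded eq], of "{0<..}"]) (auto simp: t QI_def)
qed

lemma QI_cont_pos:
  assumes F: "continuous_on UNIV F" and t: "t > 0"
  shows "isCont (QI N F) t"
  by (rule DERIV_isCont[OF QI_deriv[OF F t]])

lemma QI_cont:
  assumes F: "continuous_on UNIV F"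
  shows "continuous_on {0..b} (QI N F)"
proof -
  obtain B where B0': "\<forall>x\<in>{0..1}. \<bar>F x\<bar> \<le> B"
  proof -
    have "compact (F ` {0..1})" by (intro compact_continuous_image continuous_on_subset[OF F]) auto
    then show ?thesis using that by (auto simp: bounded_real dest!: compact_imp_bounded)
  qed
  then have B: "\<And>s. s \<in> {0..1} \<Longrightarrow> \<bar>F s\<bar> \<le> B" by blast
  have B0: "0 \<le> B" using B[of 0] by auto
  have c0: "continuous (at 0 within {0..b}) (QI N F)"
    unfolding continuous_within_eps_delta
  proof (intro allI impI)
    fix e :: real assume e: "e > 0"
    show "\<exists>d>0. \<forall>x'\<in>{0..b}. dist x' 0 < d \<longrightarrow> dist (QI N F x') (QI N F 0) < e"
    proof (intro exI[of _ "min 1 (e/(B+1))"] conjI ballI impI)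
      show "0 < min 1 (e / (B + 1))" using e B0 by auto
      fix x assume x: "x \<in> {0..b}" "dist x 0 < min 1 (e / (B + 1))"
      have x0: "0 \<le> x" "x < 1" "x < e/(B+1)" using x by auto
      have "\<bar>QI N F x\<bar> \<le> integral {0..x} (\<lambda>_. B)"
        by (rule QI_bound[OF F]) (use x0 B B0 in auto)
      also have "\<dots> = x * B" using x0 by simp
      also have "\<dots> \<le> x * (B+1)" using x0 by (intro mult_left_mono) auto
      also have "\<dots> < e" using x0 B0 by (simp add: pos_less_divide_eq)
      finally show "dist (QI N F x) (QI N F 0) < e" by (simp add: QI_def dist_real_def)
    qed
  qed
  show ?thesis
    unfolding continuous_on_eq_continuous_within
  proof
    fix x assume x: "x \<in> {0..b}"
    show "continuous (at x within {0..b}) (QI N F)"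
    proof (cases "x = 0")
      case True thus ?thesis using c0 by simp
    next
      case False thus ?thesis using x QI_cont_pos[OF F, of x] by (auto intro: continuous_at_imp_continuous_within)
    qed
  qed
qed

lemma VI_deriv:
  assumes F: "continuous_on UNIV F" and t: "t > 0"
  shows "(VI N F has_real_derivative QI N F t) (at t)"
proof -
  have "(VI N F has_real_derivative QI N F t) (at t within {0..t+1})"
    unfolding VI_def by (rule integral_has_real_derivative[OF QI_cont[OF F]]) (use t in auto)
  thus ?thesis using at_within_Icc_at[of 0 t "t+1"] t by simp
qed

lemma VI_cont:
  assumes F: "continuous_on UNIV F"
  shows "continuous_on {0..b} (VI N F)"
  unfolding VI_def
  by (rule indefinite_integral_continuous_1, rule integrable_continuous_interval, rule QI_cont[OF F])

lemma VI_bound: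
  assumes F: "continuous_on UNIV F" and H: "continuous_on {0..r} H" and r: "r \<ge> 0"
    and le: "\<And>s. s \<in> {0..r} \<Longrightarrow> \<bar>QI N F s\<bar> \<le> H s"
  shows "\<bar>VI N F r\<bar> \<le> integral {0..r} H"
  unfolding VI_def real_norm_def[symmetric]
  by (rule integral_norm_bound_integral)
     (auto intro!: integrable_continuous_interval QI_cont F H le)

lemma PI_diff:
  assumes F: "continuous_on UNIV F" and G: "continuous_on UNIV G"
  shows "PI N (\<lambda>s. F s - G s) t = PI N F t - PI N G t"
  unfolding PI_def
  by (subst integral_diff[symmetric])
     (auto intro!: integrable_continuous_interval continuous_intros continuous_on_subset[OF F] continuous_on_subset[OF G]
       simp: algebra_simps)

lemma QI_diff:
  assumes F: "continuous_on UNIV F" and G: "continuous_on UNIV G"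
  shows "QI N (\<lambda>s. F s - G s) t = QI N F t - QI N G t"
  by (simp add: QI_def PI_diff[OF F G] diff_divide_distrib)

lemma VI_diff:
  assumes F: "continuous_on UNIV F" and G: "continuous_on UNIV G"
  shows "VI N (\<lambda>s. F s - G s) t = VI N F t - VI N G t"
  unfolding VI_def QI_diff[OF F G]
  by (rule integral_diff) (auto intro!: integrable_continuous_interval QI_cont F G)

lemma int_lin_exp:
  fixes a b M t :: real
  assumes t: "0 \<le> t" and M: "M \<noteq> 0"
  shows "integral {0..t} (\<lambda>s. a + b*exp(M * s)) = a*t + b*(exp(M*t)-1)/M"
proof -
  have "((\<lambda>s. a + b*exp(M * s)) has_integral ((a*t + b*exp(M*t)/M) - (a*0 + b*exp(M*0)/M))) {0..t}"
    by (rule fundamental_theorem_of_calculus)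
       (use t M in \<open>auto intro!: derivative_eq_intros simp: has_real_derivative_iff_has_vector_derivative[symmetric]\<close>)
  then show ?thesis using M by (simp add: integral_unique right_diff_distrib diff_divide_distrib)
qed

lemma int_lin_exp2:
  fixes a b M t :: real
  assumes t: "0 \<le> t" and M: "M \<noteq> 0"
  shows "integral {0..t} (\<lambda>s. a * s + b*exp(M * s)/M) = a*t^2/2 + b*(exp(M*t)-1)/M^2"
proof -
  have "((\<lambda>s. a * s + b*exp(M * s)/M) has_integral ((a*t^2/2 + b*exp(M*t)/M^2) - (a*0^2/2 + b*exp(M*0)/M^2))) {0..t}"
    by (rule fundamental_theorem_of_calculus)
       (use t M in \<open>auto intro!: derivative_eq_intros simp: has_real_derivative_iff_has_vector_derivative[symmetric] power2_eq_square field_simps\<close>)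
  then show ?thesis using M by (simp add: integral_unique right_diff_distrib diff_divide_distrib)
qed

lemma QI_exp_bound:
  assumes F: "continuous_on UNIV F" and t: "0 \<le> t" and M: "M > 0" and ab: "0 \<le> a" "0 \<le> b"
    and le: "\<And>s. s \<in> {0..t} \<Longrightarrow> \<bar>F s\<bar> \<le> a + b*exp(M * s)"
  shows "\<bar>QI N F t\<bar> \<le> a*t + b*exp(M*t)/M"
proof -
  have "\<bar>QI N F t\<bar> \<le> integral {0..t} (\<lambda>s. a + b*exp(M * s))"
    by (rule QI_bound[OF F _ t le]) (use ab in \<open>auto intro!: continuous_intros\<close>)
  also have "\<dots> = a*t + b*(exp(M*t)-1)/M" using int_lin_exp[OF t, of M a b] M by simp
  also have "\<dots> \<le> a*t + b*exp(M*t)/M" using ab M by (intro add_left_mono divide_right_mono mult_left_mono) auto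
  finally show ?thesis .
qed

lemma VI_exp_bound:
  assumes F: "continuous_on UNIV F" and r: "0 \<le> r" and M: "M > 0" and ab: "0 \<le> a" "0 \<le> b"
    and le: "\<And>s. s \<in> {0..r} \<Longrightarrow> \<bar>F s\<bar> \<le> a + b*exp(M * s)"
  shows "\<bar>VI N F r\<bar> \<le> a*r^2/2 + b*exp(M*r)/M^2"
proof -
  have "\<bar>VI N F r\<bar> \<le> integral {0..r} (\<lambda>s. a * s + b*exp(M * s)/M)"
  proof (rule VI_bound[OF F _ r])
    show "continuous_on {0..r} (\<lambda>s. a * s + b * exp (M * s) / M)" by (intro continuous_intros) (use M in auto)
    fix s assume s: "s \<in> {0..r}"
    show "\<bar>QI N F s\<bar> \<le> a * s + b * exp (M * s) / M"
      by (rule QI_exp_bound[OF F _ M ab]) (use s le in auto)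
  qed
  also have "\<dots> = a*r^2/2 + b*(exp(M*r)-1)/M^2" using int_lin_exp2[OF r, of M a b] M by simp
  also have "\<dots> \<le> a*r^2/2 + b*exp(M*r)/M^2" using ab M by (intro add_left_mono divide_right_mono mult_left_mono) auto
  finally show ?thesis .
qed

lemma exp_sq_bound:
  assumes "0 \<le> (x::real)" shows "x^2 \<le> 4 * exp x"
proof -
  have "1 + x/2 \<le> exp (x/2)" by (rule exp_ge_add_one_self)
  then have "(1 + x/2)^2 \<le> exp(x/2)^2" using assms by (intro power_mono) auto
  also have "exp(x/2)^2 = exp x" by (simp add: exp_double[symmetric])
  finally show ?thesis using assms by (simp add: power2_eq_square field_simps)
qed

lemma VI_max_cont:
  assumes F: "continuous_on UNIV F"
  shows "continuous_on UNIV (\<lambda>r. VI N F (max r 0))"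
proof -
  have "isCont (\<lambda>r. VI N F (max r 0)) x" for x
  proof -
    let ?b = "\<bar>x\<bar> + 1"
    have "continuous_on {-?b..?b} (\<lambda>r. VI N F (max r 0))"
      by (rule continuous_on_compose2[OF VI_cont[OF F, of ?b]]) (auto intro!: continuous_intros)
    then show ?thesis
      by (rule continuous_on_interior) auto
  qed
  then show ?thesis by (simp add: continuous_at_imp_continuous_on)
qed

lemma ODE_exists:
  assumes lam: "lam > 0" and eta: "continuous_on UNIV eta0" and K: "K \<ge> 0"
    and etaK: "\<And>s. s \<ge> 0 \<Longrightarrow> \<bar>eta0 s\<bar> \<le> K"
  shows "\<exists>g. continuous_on UNIV g \<and> (\<forall>r\<ge>0. g r = VI N (\<lambda>s. eta0 s - lam * g s) r)
           \<and> (\<forall>s\<ge>0. \<bar>g s\<bar> \<le> 2*K/lam * exp(sqrt(2*lam) * s))"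
proof -
  define M where "M = sqrt(2*lam)"
  have M: "M > 0" "M^2 = 2*lam" using lam by (auto simp: M_def)
  define Fu where "Fu u s = eta0 s - lam * (exp(M * s) * u s)" for u :: "real \<Rightarrow> real" and s
  define Pf where "Pf u r = exp(-(M * max r 0)) * VI N (Fu u) (max r 0)" for u :: "real \<Rightarrow> real" and r
  have Fu_cont: "continuous_on UNIV (Fu u)" if "continuous_on UNIV u" for u
    unfolding Fu_def by (intro continuous_intros eta that)
  have Pf_bound: "\<bar>Pf u r\<bar> \<le> 2*K/M^2 + lam*B/M^2"
    if u: "continuous_on UNIV u" and B: "\<And>s. \<bar>u s\<bar> \<le> B" for u B r
  proof -
    define r' where "r' = max r 0"
    have r': "r' \<ge> 0" by (simp add: r'_def)
    have B0: "B \<ge> 0" using B[of 0] by auto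
    have "\<bar>VI N (Fu u) r'\<bar> \<le> K*r'^2/2 + (lam*B)*exp(M*r')/M^2"
    proof (rule VI_exp_bound[OF Fu_cont[OF u] r' M(1) K])
      show "0 \<le> lam*B" using lam B0 by simp
      fix s assume s: "s \<in> {0..r'}"
      have "\<bar>Fu u s\<bar> \<le> \<bar>eta0 s\<bar> + \<bar>lam * (exp(M * s) * u s)\<bar>"
        unfolding Fu_def by (rule abs_triangle_ineq4)
      also have "\<dots> = \<bar>eta0 s\<bar> + lam * (exp(M * s) * \<bar>u s\<bar>)"
        using lam by (simp add: abs_mult)
      also have "\<dots> \<le> K + lam * (exp(M * s) * B)"
        using etaK[of s] s B[of s] lam by (intro add_mono mult_left_mono) auto
      finally show "\<bar>Fu u s\<bar> \<le> K + lam * B * exp (M * s)" by (simp add: algebra_simps)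
    qed
    then have "\<bar>Pf u r\<bar> \<le> exp(-(M*r')) * (K*r'^2/2 + (lam*B)*exp(M*r')/M^2)"
      unfolding Pf_def r'_def[symmetric] by (simp add: abs_mult)
    also have "\<dots> = K/2 * (r'^2 * exp(-(M*r'))) + lam*B/M^2"
      by (simp add: field_simps exp_minus)
    also have "r'^2 * exp(-(M*r')) \<le> 4/M^2"
    proof -
      have "(M*r')^2 \<le> 4 * exp(M*r')" using M r' by (intro exp_sq_bound) auto
      then show ?thesis using M lam by (simp add: exp_minus field_simps power_mult_distrib)
    qed
    then have "K/2 * (r'^2 * exp(-(M*r'))) \<le> K/2 * (4/M^2)" using K by (intro mult_left_mono) auto
    finally show ?thesis by simp
  qed
  have Pf_cont: "continuous_on UNIV (Pf u)" if u: "continuous_on UNIV u" for u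
    unfolding Pf_def by (intro continuous_intros VI_max_cont[OF Fu_cont[OF u], unfolded o_def])
  have Pf_mem: "Pf (apply_bcontfun u) \<in> bcontfun" for u :: "real \<Rightarrow>\<^sub>C real"
    by (rule bcontfun_normI[OF Pf_cont]) (auto intro!: Pf_bound norm_bounded[of u, simplified])
  define Phi where "Phi u = Bcontfun (Pf (apply_bcontfun u))" for u :: "real \<Rightarrow>\<^sub>C real"
  have Phi_app: "apply_bcontfun (Phi u) = Pf (apply_bcontfun u)" for u
    unfolding Phi_def using Pf_mem by (simp add: Bcontfun_inverse)
  have lip: "dist (Phi u) (Phi v) \<le> 1/2 * dist u v" for u v
  proof (rule dist_bound)
    fix r :: real
    define r' where "r' = max r 0"
    have r': "r' \<ge> 0" by (simp add: r'_def)
    let ?D = "dist u v"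
    have cu: "continuous_on UNIV (apply_bcontfun u)" "continuous_on UNIV (apply_bcontfun v)" by auto
    have vb: "\<bar>VI N (\<lambda>s. Fu u s - Fu v s) r'\<bar> \<le> 0*r'^2/2 + (lam*?D)*exp(M*r')/M^2"
    proof (rule VI_exp_bound[OF _ r' M(1)])
      show "continuous_on UNIV (\<lambda>s. Fu u s - Fu v s)" by (intro continuous_intros Fu_cont cu)
      show "0 \<le> lam*?D" using lam by simp
      fix s assume s: "s \<in> {0..r'}"
      have "Fu u s - Fu v s = - (lam * exp(M * s) * (u s - v s))"
        unfolding Fu_def by (simp add: algebra_simps)
      then have "\<bar>Fu u s - Fu v s\<bar> = lam * exp(M * s) * \<bar>u s - v s\<bar>"
        using lam by (simp add: abs_mult)
      also have "\<dots> \<le> lam * exp(M * s) * ?D"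
        using dist_bounded[of u s v] lam by (intro mult_left_mono) (auto simp: dist_real_def)
      finally show "\<bar>Fu u s - Fu v s\<bar> \<le> 0 + lam * ?D * exp (M * s)" by (simp add: algebra_simps)
    qed simp
    then have "\<bar>Pf u r - Pf v r\<bar> \<le> exp(-(M*r')) * ((lam*?D)*exp(M*r')/M^2)"
    proof -
      have vd: "VI N (Fu u) r' - VI N (Fu v) r' = VI N (\<lambda>s. Fu u s - Fu v s) r'"
        by (rule VI_diff[OF Fu_cont[OF cu(1)] Fu_cont[OF cu(2)], symmetric])
      have "\<bar>Pf u r - Pf v r\<bar> = exp(-(M*r')) * \<bar>VI N (\<lambda>s. Fu u s - Fu v s) r'\<bar>"
        unfolding Pf_def r'_def[symmetric] vd[symmetric] by (simp add: abs_mult right_diff_distrib[symmetric])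
      then show ?thesis using mult_left_mono[OF vb, of "exp(-(M*r'))"] by simp
    qed
    also have "\<dots> = 1/2 * ?D" using M lam by (simp add: exp_minus field_simps)
    finally show "dist (Phi u r) (Phi v r) \<le> 1/2 * ?D" by (simp add: Phi_app dist_real_def)
  qed
  obtain u where fx: "Phi u = u"
    using banach_fix_type[of "1/2" Phi] lip by auto
  have uf: "apply_bcontfun u r = Pf (apply_bcontfun u) r" for r
    using Phi_app[of u] fx by simp
  have "norm u \<le> 2*K/M^2 + lam * norm u/M^2"
    by (rule norm_bound) (auto simp: uf intro!: Pf_bound norm_bounded[of u, simplified])
  then have nu: "norm u \<le> 4*K/M^2" using M lam by (simp add: field_simps)
  define g where "g s = exp(M * s) * apply_bcontfun u s" for s
  have gc: "continuous_on UNIV g" unfolding g_def by (intro continuous_intros) auto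
  have Fg: "Fu (apply_bcontfun u) = (\<lambda>s. eta0 s - lam * g s)"
    by (simp add: Fu_def g_def fun_eq_iff)
  have geq: "g r = VI N (\<lambda>s. eta0 s - lam * g s) r" if r: "r \<ge> 0" for r
  proof -
    have "g r = exp(M*r) * (exp(-(M*r)) * VI N (\<lambda>s. eta0 s - lam * g s) r)"
    proof -
      have "g r = exp(M*r) * apply_bcontfun u r" by (simp add: g_def)
      also have "apply_bcontfun u r = exp(-(M*r)) * VI N (\<lambda>s. eta0 s - lam * g s) r"
        using uf[of r] r by (simp add: Pf_def Fg)
      finally show ?thesis .
    qed
    then show ?thesis by (simp add: exp_minus)
  qed
  have gb: "\<bar>g s\<bar> \<le> 2*K/lam * exp(sqrt(2*lam) * s)" for s
  proof -
    have "\<bar>g s\<bar> = exp(M * s) * \<bar>apply_bcontfun u s\<bar>" by (simp add: g_def abs_mult)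
    also have "\<dots> \<le> exp(M * s) * (4*K/M^2)"
      using norm_bounded[of u s] nu by (intro mult_left_mono) auto
    also have "\<dots> = 2*K/lam * exp(sqrt(2*lam) * s)" using M lam by (simp add: M_def)
    finally show ?thesis .
  qed
  show ?thesis using gc geq gb by blast
qed

lemma powr_deriv_div:
  assumes r: "r > 0"
  shows "((\<lambda>r. r powr m) has_real_derivative m * (r powr m) / r) (at r)"
proof -
  have "r powr (m - 1) = r powr m / r" using r by (simp add: powr_diff)
  then show ?thesis using has_real_derivative_powr[OF r, of m] by simp
qed

lemma energy:
  fixes g g' g'' eta0 :: "real \<Rightarrow> real" and lam m K R0 \<delta> :: real
  assumes lam: "lam > 0" and R0: "R0 \<ge> 1" and cR0: "2 * \<bar>m*(m-1)\<bar> \<le> lam * R0"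
    and \<delta>: "0 < \<delta>" "\<delta> \<le> 2"
    and dg: "\<And>r. r > 0 \<Longrightarrow> (g has_real_derivative g' r) (at r)"
    and dg': "\<And>r. r > 0 \<Longrightarrow> (g' has_real_derivative g'' r) (at r)"
    and ode: "\<And>r. r > 0 \<Longrightarrow> g'' r = eta0 r - lam * g r - (2*m) / r * g' r"
    and etab: "\<And>r. r \<ge> R0 \<Longrightarrow> \<bar>r powr m * eta0 r\<bar> \<le> K * r powr (-1-\<delta>)"
    and K: "K \<ge> 0"
    and r: "r \<ge> R0"
  defines "E \<equiv> \<lambda>r. (m * (r powr m) / r * g r + r powr m * g' r)^2 + (lam - m*(m-1)/r^2) * (r powr m * g r)^2"
  shows "E r + K^2 \<le> exp((1 + 4*\<bar>m*(m-1)\<bar>/lam)/\<delta>) * (E R0 + K^2)"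
    and "(m * (r powr m) / r * g r + r powr m * g' r)^2 \<le> E r"
    and "lam/2 * (r powr m * g r)^2 \<le> E r"
proof -
  define c where "c = m*(m-1)"
  define P where "P = (\<lambda>r::real. r powr m)"
  define u where "u = (\<lambda>r. P r * g r)"
  define ud where "ud = (\<lambda>r. m * P r / r * g r + P r * g' r)"
  define udd where "udd = (\<lambda>r. c/r^2 * u r + P r * eta0 r - lam * u r)"
  have Eeq: "E = (\<lambda>r. ud r ^2 + (lam - c/r^2) * u r ^2)"
    by (simp add: E_def ud_def u_def P_def c_def)
  have dP: "(P has_real_derivative m * P r / r) (at r)" if "r > 0" for r
    unfolding P_def using powr_deriv_div[OF that] by simp
  have Du: "(u has_real_derivative ud r) (at r)" if r: "r > 0" for r
    unfolding u_def ud_def using r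
    by (auto intro!: derivative_eq_intros dP dg)
  have Dud: "(ud has_real_derivative udd r) (at r)" if r: "r > 0" for r
  proof -
    have "(ud has_real_derivative
        (m * (m * P r / r) * r - m * P r * 1) / r^2 * g r + m * P r / r * g' r
          + (m * P r / r * g' r + P r * g'' r)) (at r)"
      unfolding ud_def using r
      by (auto intro!: derivative_eq_intros dP dg dg' simp: power2_eq_square field_simps)
    moreover have "(m * (m * P r / r) * r - m * P r * 1) / r^2 * g r + m * P r / r * g' r
          + (m * P r / r * g' r + P r * g'' r) = udd r"
      unfolding udd_def u_def c_def ode[OF r] using r
      by (simp add: field_simps power2_eq_square)
    ultimately show ?thesis by simp
  qed
  have DE: "(E has_real_derivative 2 * ud r * (P r * eta0 r) + 2 * c / r^3 * u r ^ 2) (at r)"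
    if r: "r > 0" for r
  proof -
    have D: "(E has_real_derivative
        2 * ud r * udd r + (2 * c / r^3 * u r^2 + (lam - c/r^2) * (2 * u r * ud r))) (at r)"
      unfolding Eeq using r
      by (auto intro!: derivative_eq_intros Du Dud simp: power2_eq_square power3_eq_cube field_simps)
    have eq: "2 * ud r * udd r + (2 * c / r^3 * u r^2 + (lam - c/r^2) * (2 * u r * ud r))
        = 2 * ud r * (P r * eta0 r) + 2 * c / r^3 * u r ^ 2"
      unfolding udd_def using r by (simp add: field_simps power2_eq_square)
    show ?thesis using D unfolding eq .
  qed
  define a0 where "a0 = 1 + 4*\<bar>c\<bar>/lam"
  have a0: "a0 \<ge> 1" using lam by (simp add: a0_def)
  have coef: "lam - c/s^2 \<ge> lam/2" if s: "s \<ge> R0" for s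
  proof -
    have s1: "s \<ge> 1" using s R0 by simp
    have "c/s^2 \<le> \<bar>c\<bar>/s^2" by (simp add: divide_right_mono)
    also have "\<dots> \<le> \<bar>c\<bar>/s" using s1 by (intro divide_left_mono) (auto simp: power2_eq_square)
    also have "\<dots> \<le> \<bar>c\<bar>/R0" using s R0 by (intro divide_left_mono) auto
    also have "\<dots> \<le> lam/2" using cR0 R0 by (simp add: c_def divide_simps)
    finally show ?thesis by simp
  qed
  have Ebounds: "ud s ^2 \<le> E s" "lam/2 * u s ^2 \<le> E s" "E s \<ge> 0" if s: "s \<ge> R0" for s
  proof -
    have "lam/2 * u s^2 \<le> (lam - c/s^2) * u s^2" using coef[OF s] by (intro mult_right_mono) auto
    moreover have "0 \<le> lam/2 * u s^2" using lam by simp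
    moreover have "0 \<le> ud s^2" by simp
    moreover have "E s = ud s^2 + (lam - c/s^2) * u s^2" by (simp add: Eeq)
    ultimately show "ud s ^2 \<le> E s" "lam/2 * u s ^2 \<le> E s" "E s \<ge> 0"
      by linarith+
  qed
  have Eder: "2 * ud s * (P s * eta0 s) + 2 * c / s^3 * u s ^ 2 \<le> a0 * s powr (-1-\<delta>) * (E s + K^2)"
    if s: "s \<ge> R0" for s
  proof -
    have s1: "s \<ge> 1" using s R0 by simp
    define w where "w = s powr (-1-\<delta>)"
    have w0: "w \<ge> 0" by (simp add: w_def)
    have w3: "1 / s^3 \<le> w"
    proof -
      have "s powr (-3) \<le> s powr (-1-\<delta>)" using s1 \<delta> by (intro powr_mono) auto
      moreover have "s powr (-3) = 1/s^3" using s1 by (simp add: powr_minus_divide powr_realpow)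
      ultimately show ?thesis by (simp add: w_def)
    qed
    have t1: "2 * ud s * (P s * eta0 s) \<le> (E s + K^2) * w"
    proof -
      have "2 * ud s * (P s * eta0 s) \<le> 2 * \<bar>ud s\<bar> * (K * w)"
      proof -
        have "2 * ud s * (P s * eta0 s) \<le> \<bar>2 * ud s * (P s * eta0 s)\<bar>" by (rule abs_ge_self)
        also have "\<dots> = 2 * \<bar>ud s\<bar> * \<bar>P s * eta0 s\<bar>" by (simp add: abs_mult)
        also have "\<dots> \<le> 2 * \<bar>ud s\<bar> * (K * w)"
          using etab[OF s] unfolding P_def w_def by (intro mult_left_mono) auto
        finally show ?thesis .
      qed
      also have "\<dots> = (2 * \<bar>ud s\<bar> * K) * w" by simp
      also have "\<dots> \<le> (ud s^2 + K^2) * w"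
      proof (rule mult_right_mono[OF _ w0])
        have "0 \<le> (\<bar>ud s\<bar> - K)^2" by simp
        then show "2 * \<bar>ud s\<bar> * K \<le> ud s^2 + K^2" by (simp add: power2_eq_square algebra_simps)
      qed
      also have "\<dots> \<le> (E s + K^2) * w" using Ebounds(1)[OF s] w0 by (intro mult_right_mono) auto
      finally show ?thesis .
    qed
    have t2: "2 * c / s^3 * u s ^ 2 \<le> 4*\<bar>c\<bar>/lam * E s * w"
    proof -
      have "2 * c / s^3 * u s ^ 2 \<le> 2 * \<bar>c\<bar> * (1/s^3) * u s^2"
      proof -
        have e1: "2 * c / s^3 * u s^2 = (c * u s^2) * (2/s^3)" by simp
        have e2: "2 * \<bar>c\<bar> * (1/s^3) * u s^2 = (\<bar>c\<bar> * u s^2) * (2/s^3)" by simp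
        have "c * u s^2 \<le> \<bar>c\<bar> * u s^2" by (intro mult_right_mono) auto
        then show ?thesis unfolding e1 e2 using s1 by (intro mult_right_mono) auto
      qed
      also have "\<dots> \<le> 2 * \<bar>c\<bar> * w * u s^2"
        by (intro mult_right_mono mult_left_mono w3) auto
      also have "u s^2 \<le> 2/lam * E s" using Ebounds(2)[OF s] lam by (simp add: field_simps)
      then have "2 * \<bar>c\<bar> * w * u s^2 \<le> 2 * \<bar>c\<bar> * w * (2/lam * E s)" using w0 by (intro mult_left_mono) auto
      also have "\<dots> = 4*\<bar>c\<bar>/lam * E s * w" by simp
      finally show ?thesis .
    qed
    have "2 * ud s * (P s * eta0 s) + 2 * c / s^3 * u s ^ 2 \<le> (E s + K^2) * w + 4*\<bar>c\<bar>/lam * E s * w"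
      using t1 t2 by simp
    also have "\<dots> \<le> a0 * w * (E s + K^2)"
    proof -
      have "0 \<le> 4*\<bar>c\<bar>/lam * K^2 * w" using lam w0 by simp
      moreover have "a0 * w * (E s + K^2) = (E s + K^2) * w + 4*\<bar>c\<bar>/lam * E s * w + 4*\<bar>c\<bar>/lam * K^2 * w"
        unfolding a0_def by (simp add: algebra_simps add_divide_distrib)
      ultimately show ?thesis by linarith
    qed
    finally show ?thesis by (simp add: w_def)
  qed
  define A where "A = (\<lambda>s. a0 * (R0 powr (-\<delta>) - s powr (-\<delta>)) / \<delta>)"
  define Z where "Z = (\<lambda>s. (E s + K^2) * exp (- A s))"
  have DA: "(A has_real_derivative a0 * s powr (-1-\<delta>)) (at s)" if s: "s > 0" for s
  proof -
    have "(A has_real_derivative a0 * (0 - (-\<delta>) * s powr (-\<delta> - 1)) / \<delta>) (at s)"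
      unfolding A_def using s by (auto intro!: derivative_eq_intros)
    moreover have pe: "s powr (-\<delta> - 1) = s powr (-1 - \<delta>)" by (rule arg_cong[where f="\<lambda>x. s powr x"]) simp
    ultimately show ?thesis using \<delta> by simp
  qed
  have "Z R0 \<ge> Z r"
  proof (rule DERIV_nonpos_imp_nonincreasing[OF r])
    fix s assume s: "R0 \<le> s" "s \<le> r"
    have sp: "s > 0" using s R0 by simp
    have "(Z has_real_derivative
       (2 * ud s * (P s * eta0 s) + 2 * c / s^3 * u s ^ 2 + 0) * exp (- A s) + (E s + K^2) * (exp (- A s) * (- (a0 * s powr (-1-\<delta>))))) (at s)"
      unfolding Z_def by (auto intro!: derivative_eq_intros DE DA sp)
    moreover have "(2 * ud s * (P s * eta0 s) + 2 * c / s^3 * u s ^ 2 + 0) * exp (- A s) + (E s + K^2) * (exp (- A s) * (- (a0 * s powr (-1-\<delta>)))) \<le> 0"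
    proof -
      have "(2 * ud s * (P s * eta0 s) + 2 * c / s^3 * u s ^ 2 + 0) * exp (- A s) \<le> (a0 * s powr (-1-\<delta>) * (E s + K^2)) * exp (- A s)"
        using Eder[OF s(1)] by (intro mult_right_mono) auto
      then show ?thesis by (simp add: algebra_simps)
    qed
    ultimately show "\<exists>y. (Z has_real_derivative y) (at s) \<and> y \<le> 0" by blast
  qed
  then have "(E r + K^2) * exp (- A r) \<le> E R0 + K^2" by (simp add: Z_def A_def)
  then have "E r + K^2 \<le> exp (A r) * (E R0 + K^2)" by (simp add: exp_minus field_simps)
  also have "\<dots> \<le> exp (a0/\<delta>) * (E R0 + K^2)"
  proof (rule mult_right_mono)
    show "0 \<le> E R0 + K^2" using Ebounds(3)[of R0] by simp
    have "R0 powr (-\<delta>) \<le> 1" using powr_mono[of "-\<delta>" 0 R0] R0 \<delta> by simp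
    moreover have "0 \<le> r powr (-\<delta>)" by simp
    ultimately have "R0 powr (-\<delta>) - r powr (-\<delta>) \<le> 1" by linarith
    then have "a0 * (R0 powr (-\<delta>) - r powr (-\<delta>)) \<le> a0 * 1" using a0 by (intro mult_left_mono) auto
    then have "A r \<le> a0/\<delta>" unfolding A_def using \<delta> by (intro divide_right_mono) auto
    then show "exp (A r) \<le> exp (a0/\<delta>)" by simp
  qed
  finally show "E r + K^2 \<le> exp((1 + 4*\<bar>m*(m-1)\<bar>/lam)/\<delta>) * (E R0 + K^2)"
    by (simp add: a0_def c_def)
  show "(m * (r powr m) / r * g r + r powr m * g' r)^2 \<le> E r"
    using Ebounds(1)[OF r] by (simp add: ud_def P_def)
  show "lam/2 * (r powr m * g r)^2 \<le> E r"
    using Ebounds(2)[OF r] by (simp add: u_def P_def)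
qed

lemma sq_le_imp_abs_le:
  fixes a X K :: real
  assumes "a^2 \<le> X * K^2" "K \<ge> 0"
  shows "\<bar>a\<bar> \<le> sqrt X * K"
proof -
  have "sqrt (a^2) \<le> sqrt (X * K^2)" using assms by (intro real_sqrt_le_mono)
  then show ?thesis using assms by (simp add: real_sqrt_mult)
qed

lemma div_le_self_ge1:
  fixes a R :: real
  assumes "0 \<le> a" "1 \<le> R" shows "a / R \<le> a"
proof -
  have "a * 1 \<le> a * R" using assms by (intro mult_left_mono) auto
  then show ?thesis using assms by (simp add: divide_le_eq)
qed

lemma max_mul_le1:
  fixes a b c K :: real
  assumes "0 \<le> K" shows "a * (c * K) \<le> max (a*c) b * K"
proof -
  have "(a*c) * K \<le> max (a*c) b * K" using assms by (intro mult_right_mono) auto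
  then show ?thesis by (simp add: mult.assoc)
qed

lemma max_mul_le2:
  fixes a b c K :: real
  assumes "0 \<le> K" shows "b * (c * K) \<le> max a (b*c) * K"
proof -
  have "(b*c) * K \<le> max a (b*c) * K" using assms by (intro mult_right_mono) auto
  then show ?thesis by (simp add: mult.assoc)
qed

lemma radial_solution:
  fixes lam \<beta> :: real and N :: nat
  assumes lam: "lam > 0" and N: "N \<ge> 2" and \<beta>: "\<beta> > (real N + 1)/2"
  defines "m \<equiv> (real N - 1)/2"
  shows "\<exists>D1 D2. D1 \<ge> 0 \<and> D2 \<ge> 0 \<and> (\<forall>eta0 K. continuous_on UNIV eta0 \<longrightarrow> K \<ge> 0 \<longrightarrow>
     (\<forall>s\<ge>0. \<bar>eta0 s\<bar> \<le> K * (1+s) powr (-\<beta>)) \<longrightarrow>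
     (\<exists>g g' g''. continuous_on UNIV g
        \<and> (\<forall>r>0. (g has_real_derivative g' r) (at r) \<and> (g' has_real_derivative g'' r) (at r))
        \<and> (\<forall>r>0. g'' r + (real N - 1)/r * g' r + lam * g r = eta0 r)
        \<and> (\<forall>r\<ge>0. (1+r) powr m * \<bar>g r\<bar> \<le> D1 * K)
        \<and> (\<forall>r>0. (1+r) powr m * \<bar>g' r\<bar> \<le> D2 * K)))"
proof -
  define c where "c = m*(m-1)"
  define M where "M = sqrt(2*lam)"
  have M: "M > 0" using lam by (simp add: M_def)
  have m: "m \<ge> 1/2" using N by (simp add: m_def)
  define R0 where "R0 = 1 + 2*\<bar>c\<bar>/lam"
  have R0: "R0 \<ge> 1" "2 * \<bar>m*(m-1)\<bar> \<le> lam * R0" using lam by (auto simp: R0_def c_def field_simps)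
  define \<delta> where "\<delta> = min 1 (\<beta> - m - 1)"
  have \<delta>: "0 < \<delta>" "\<delta> \<le> 2" "m - \<beta> \<le> -1 - \<delta>" using \<beta> unfolding \<delta>_def m_def by (auto simp: field_simps min_def)
  define c1 where "c1 = 2/lam * exp(M*R0)"
  define c2 where "c2 = R0 + 2*exp(M*R0)/M"
  define P0 where "P0 = R0 powr m"
  define c5 where "c5 = P0^2 * (\<bar>m\<bar>*c1 + c2)^2 + (lam + \<bar>c\<bar>) * P0^2 * c1^2"
  define X where "X = exp((1 + 4*\<bar>c\<bar>/lam)/\<delta>) * (c5 + 1)"
  define D1 where "D1 = max ((1+R0) powr m * c1) (2 powr m * sqrt(2*X/lam))"
  define D2 where "D2 = max ((1+R0) powr m * c2) (2 powr m * (sqrt X + \<bar>m\<bar> * sqrt(2*X/lam)))"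
  have c1: "c1 \<ge> 0" using lam by (simp add: c1_def)
  have c2: "c2 \<ge> 0" using M R0 by (simp add: c2_def)
  have c5: "c5 \<ge> 0" using lam by (simp add: c5_def)
  have X: "X \<ge> 0" using c5 by (simp add: X_def)
  have D1: "D1 \<ge> 0" unfolding D1_def by (rule order.trans[OF _ max.cobounded1]) (use c1 in simp)
  have D2: "D2 \<ge> 0" unfolding D2_def by (rule order.trans[OF _ max.cobounded1]) (use c2 in simp)
  show ?thesis
  proof (rule exI[of _ D1], rule exI[of _ D2], intro conjI D1 D2 allI impI)
    fix eta0 :: "real \<Rightarrow> real" and K :: real
    assume eta: "continuous_on UNIV eta0" and K: "K \<ge> 0"
      and etab: "\<forall>s\<ge>0. \<bar>eta0 s\<bar> \<le> K * (1+s) powr (-\<beta>)"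
    have etaK: "\<bar>eta0 s\<bar> \<le> K" if "s \<ge> 0" for s
    proof -
      have "(1+s) powr (-\<beta>) \<le> 1" using that \<beta> powr_mono[of "-\<beta>" 0 "1+s"] by simp
      then show ?thesis using etab that K by (meson mult_left_le order.trans)
    qed
    obtain g where gc: "continuous_on UNIV g"
      and geq: "\<And>r. r \<ge> 0 \<Longrightarrow> g r = VI N (\<lambda>s. eta0 s - lam * g s) r"
      and gb: "\<And>s. s \<ge> 0 \<Longrightarrow> \<bar>g s\<bar> \<le> 2*K/lam * exp(sqrt(2*lam) * s)"
      using ODE_exists[OF lam eta K etaK, of N] by blast
    define F where "F = (\<lambda>s. eta0 s - lam * g s)"
    have Fc: "continuous_on UNIV F" unfolding F_def by (intro continuous_intros eta gc)
    define g' where "g' = QI N F"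
    define g'' where "g'' = (\<lambda>r. F r - real (N-1) / r * QI N F r)"
    have dg: "(g has_real_derivative g' r) (at r)" if r: "r > 0" for r
      unfolding g'_def
      by (rule has_field_derivative_transform_within_open[OF VI_deriv[OF Fc r], of "{0<..}"])
         (use r geq in \<open>auto simp: F_def\<close>)
    have dg': "(g' has_real_derivative g'' r) (at r)" if r: "r > 0" for r
      unfolding g'_def g''_def by (rule QI_deriv[OF Fc r])
    have NN: "real (N-1) = real N - 1" "real (N - Suc 0) = real N - 1" using N by auto
    have ode: "g'' r + (real N - 1)/r * g' r + lam * g r = eta0 r" if "r > 0" for r
      by (simp add: g''_def g'_def F_def NN)
    have ode2: "g'' r = eta0 r - lam * g r - (2*m) / r * g' r" if "r > 0" for r
      using that by (simp add: g''_def g'_def F_def NN m_def field_simps)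
    have gb0: "\<bar>g s\<bar> \<le> c1 * K" if s: "0 \<le> s" "s \<le> R0" for s
    proof -
      have "\<bar>g s\<bar> \<le> 2*K/lam * exp(M * s)" using gb[OF s(1)] by (simp add: M_def)
      also have "\<dots> \<le> 2*K/lam * exp(M*R0)" using s M K lam by (intro mult_left_mono) auto
      finally show ?thesis by (simp add: c1_def algebra_simps)
    qed
    have g'b0: "\<bar>g' s\<bar> \<le> c2 * K" if s: "0 \<le> s" "s \<le> R0" for s
    proof -
      have "\<bar>g' s\<bar> \<le> K * s + (2*K)*exp(M * s)/M"
        unfolding g'_def
      proof (rule QI_exp_bound[OF Fc s(1) M K])
        show "0 \<le> 2*K" using K by simp
        fix t assume t: "t \<in> {0..s}"
        have "\<bar>F t\<bar> \<le> \<bar>eta0 t\<bar> + \<bar>lam * g t\<bar>" unfolding F_def by (rule abs_triangle_ineq4)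
        also have "\<dots> \<le> K + lam * (2*K/lam * exp(M*t))"
        proof (rule add_mono)
          show "\<bar>eta0 t\<bar> \<le> K" using etaK[of t] t by auto
          have "\<bar>g t\<bar> \<le> 2*K/lam * exp(M*t)" using gb[of t] t by (auto simp: M_def)
          then have "lam * \<bar>g t\<bar> \<le> lam * (2*K/lam * exp(M*t))" using lam by (intro mult_left_mono) auto
          then show "\<bar>lam * g t\<bar> \<le> lam * (2*K/lam * exp(M*t))" using lam by (simp add: abs_mult)
        qed
        also have "\<dots> = K + 2*K*exp(M*t)" using lam by simp
        finally show "\<bar>F t\<bar> \<le> K + 2 * K * exp (M * t)" .
      qed
      also have "\<dots> \<le> K*R0 + (2*K)*exp(M*R0)/M"
        using s K M by (intro add_mono mult_left_mono divide_right_mono) auto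
      also have "\<dots> = c2 * K" by (simp add: c2_def algebra_simps)
      finally show ?thesis .
    qed
    have etab2: "\<bar>r powr m * eta0 r\<bar> \<le> K * r powr (-1-\<delta>)" if r: "r \<ge> R0" for r
    proof -
      have r1: "r \<ge> 1" using r R0 by simp
      have "\<bar>r powr m * eta0 r\<bar> = r powr m * \<bar>eta0 r\<bar>" by (simp add: abs_mult)
      also have "\<dots> \<le> r powr m * (K * (1+r) powr (-\<beta>))"
        using etab r1 by (intro mult_left_mono) auto
      also have "(1+r) powr (-\<beta>) \<le> r powr (-\<beta>)" using r1 \<beta> by (intro powr_mono2') auto
      then have "r powr m * (K * (1+r) powr (-\<beta>)) \<le> r powr m * (K * r powr (-\<beta>))"
        using K by (intro mult_left_mono) auto
      also have "\<dots> = K * r powr (m - \<beta>)" using r1 by (simp add: powr_add[symmetric])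
      also have "\<dots> \<le> K * r powr (-1-\<delta>)" using K r1 \<delta> by (intro mult_left_mono powr_mono) auto
      finally show ?thesis .
    qed
    define E where "E = (\<lambda>r. (m * (r powr m) / r * g r + r powr m * g' r)^2 + (lam - m*(m-1)/r^2) * (r powr m * g r)^2)"
    have en: "E r + K^2 \<le> exp((1 + 4*\<bar>m*(m-1)\<bar>/lam)/\<delta>) * (E R0 + K^2)"
        "(m * (r powr m) / r * g r + r powr m * g' r)^2 \<le> E r"
        "lam/2 * (r powr m * g r)^2 \<le> E r" if r: "r \<ge> R0" for r
      unfolding E_def
      by (rule energy[where g=g and g'=g' and g''=g'', OF lam R0(1) R0(2) \<delta>(1,2) _ _ _ _ K r];
          (rule dg dg' ode2 etab2; assumption))+
    have ER0: "E R0 \<le> c5 * K^2"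
    proof -
      have R0p: "R0 > 0" using R0 by simp
      have P0: "P0 \<ge> 0" by (simp add: P0_def)
      have g1: "\<bar>g R0\<bar> \<le> c1 * K" using gb0[of R0] R0 by simp
      have g2: "\<bar>g' R0\<bar> \<le> c2 * K" using g'b0[of R0] R0 by simp
      have t1: "\<bar>m * P0 / R0 * g R0 + P0 * g' R0\<bar> \<le> P0 * ((\<bar>m\<bar>*c1 + c2) * K)"
      proof -
        have "\<bar>m * P0 / R0 * g R0 + P0 * g' R0\<bar> \<le> \<bar>m\<bar> * P0 / R0 * \<bar>g R0\<bar> + P0 * \<bar>g' R0\<bar>"
          using P0 R0p by (auto simp: abs_mult intro: order.trans[OF abs_triangle_ineq])
        also have "\<dots> \<le> \<bar>m\<bar> * P0 * \<bar>g R0\<bar> + P0 * \<bar>g' R0\<bar>"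
        proof -
          have "\<bar>m\<bar> * P0 / R0 \<le> \<bar>m\<bar> * P0" using R0 P0 by (intro div_le_self_ge1) auto
          then show ?thesis by (intro add_right_mono mult_right_mono) auto
        qed
        also have "\<dots> \<le> \<bar>m\<bar> * P0 * (c1*K) + P0 * (c2*K)"
          using g1 g2 P0 by (intro add_mono mult_left_mono) auto
        also have "\<dots> = P0 * ((\<bar>m\<bar>*c1 + c2) * K)" by (simp add: algebra_simps)
        finally show ?thesis .
      qed
      have t1': "(m * P0 / R0 * g R0 + P0 * g' R0)^2 \<le> P0^2 * (\<bar>m\<bar>*c1 + c2)^2 * K^2"
      proof -
        have "(m * P0 / R0 * g R0 + P0 * g' R0)^2 = \<bar>m * P0 / R0 * g R0 + P0 * g' R0\<bar>^2" by simp
        also have "\<dots> \<le> (P0 * ((\<bar>m\<bar>*c1 + c2) * K))^2" using t1 by (intro power_mono) auto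
        finally show ?thesis by (simp add: power_mult_distrib)
      qed
      have t2: "(lam - m*(m-1)/R0^2) * (P0 * g R0)^2 \<le> (lam + \<bar>c\<bar>) * (P0^2 * c1^2 * K^2)"
      proof (rule mult_mono)
        have "- (m*(m-1)/R0^2) \<le> \<bar>c\<bar>/R0^2" unfolding c_def minus_divide_left by (intro divide_right_mono) auto
        also have "\<dots> \<le> \<bar>c\<bar>" using R0 by (simp add: divide_le_eq mult_le_cancel_left1 one_le_power)
        finally show "lam - m*(m-1)/R0^2 \<le> lam + \<bar>c\<bar>" by simp
        have "(P0 * g R0)^2 = (P0 * \<bar>g R0\<bar>)^2" by (simp add: power2_eq_square)
        also have "\<dots> \<le> (P0 * (c1*K))^2" using g1 P0 by (intro power_mono mult_left_mono) auto
        finally show "(P0 * g R0)^2 \<le> P0^2 * c1^2 * K^2" by (simp add: power_mult_distrib)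
      qed (use lam in auto)
      have "E R0 = (m * P0 / R0 * g R0 + P0 * g' R0)^2 + (lam - m*(m-1)/R0^2) * (P0 * g R0)^2"
        by (simp add: E_def P0_def)
      also have "\<dots> \<le> P0^2 * (\<bar>m\<bar>*c1 + c2)^2 * K^2 + (lam + \<bar>c\<bar>) * (P0^2 * c1^2 * K^2)"
        using t1' t2 by (rule add_mono)
      also have "\<dots> = c5 * K^2" by (simp add: c5_def algebra_simps)
      finally show ?thesis .
    qed
    have Eb: "E r \<le> X * K^2" if r: "r \<ge> R0" for r
    proof -
      have "E r + K^2 \<le> exp((1 + 4*\<bar>m*(m-1)\<bar>/lam)/\<delta>) * (E R0 + K^2)" using en(1)[OF r] .
      also have "\<dots> \<le> exp((1 + 4*\<bar>m*(m-1)\<bar>/lam)/\<delta>) * ((c5 + 1) * K^2)"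
        using ER0 by (intro mult_left_mono) (auto simp: algebra_simps)
      finally show ?thesis by (simp add: X_def c_def algebra_simps)
        (smt (verit) mult_nonneg_nonneg exp_ge_zero zero_le_power2)
    qed
    have far_g: "r powr m * \<bar>g r\<bar> \<le> sqrt(2*X/lam) * K" if r: "r \<ge> R0" for r
    proof -
      have "lam/2 * (r powr m * g r)^2 \<le> X * K^2" using en(3)[OF r] Eb[OF r] by linarith
      then have "(r powr m * g r)^2 \<le> (2*X/lam) * K^2" using lam by (simp add: field_simps)
      from sq_le_imp_abs_le[OF this K] show ?thesis by (simp add: abs_mult)
    qed
    have far_g': "r powr m * \<bar>g' r\<bar> \<le> (sqrt X + \<bar>m\<bar> * sqrt(2*X/lam)) * K" if r: "r \<ge> R0" for r
    proof -
      have r1: "r \<ge> 1" using r R0 by simp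
      have "(m * (r powr m) / r * g r + r powr m * g' r)^2 \<le> X * K^2" using en(2)[OF r] Eb[OF r] by linarith
      from sq_le_imp_abs_le[OF this K]
      have ud: "\<bar>m * (r powr m) / r * g r + r powr m * g' r\<bar> \<le> sqrt X * K" .
      have "\<bar>m * (r powr m) / r * g r\<bar> = \<bar>m\<bar> * (r powr m * \<bar>g r\<bar>) / r" using r1 by (simp add: abs_mult)
      also have "\<dots> \<le> \<bar>m\<bar> * (r powr m * \<bar>g r\<bar>)" using r1 by (intro div_le_self_ge1) auto
      also have "\<dots> \<le> \<bar>m\<bar> * (sqrt(2*X/lam) * K)" using far_g[OF r] by (intro mult_left_mono) auto
      finally have t: "\<bar>m * (r powr m) / r * g r\<bar> \<le> \<bar>m\<bar> * (sqrt(2*X/lam) * K)" .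
      have "r powr m * \<bar>g' r\<bar> = \<bar>r powr m * g' r\<bar>" by (simp add: abs_mult)
      also have "\<dots> \<le> \<bar>m * (r powr m) / r * g r + r powr m * g' r\<bar> + \<bar>m * (r powr m) / r * g r\<bar>"
        using abs_triangle_ineq4[of "m * (r powr m) / r * g r + r powr m * g' r" "m * (r powr m) / r * g r"] by simp
      also have "\<dots> \<le> sqrt X * K + \<bar>m\<bar> * (sqrt(2*X/lam) * K)" using ud t by linarith
      finally show ?thesis by (simp add: algebra_simps)
    qed
    have w2: "(1+r) powr m \<le> 2 powr m * r powr m" if r: "r \<ge> 1" for r
    proof -
      have "(1+r) powr m \<le> (2*r) powr m" using r m by (intro powr_mono2) auto
      then show ?thesis using r by (simp add: powr_mult)
    qed
    have wR: "(1+r) powr m \<le> (1+R0) powr m" if r: "0 \<le> r" "r \<le> R0" for r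
      using r m by (intro powr_mono2) auto
    have b1: "(1+r) powr m * \<bar>g r\<bar> \<le> D1 * K" if r: "r \<ge> 0" for r
        proof (cases "r \<le> R0")
          case True
          have "(1+r) powr m * \<bar>g r\<bar> \<le> (1+R0) powr m * (c1 * K)"
            using wR[OF r True] gb0[OF r True] by (intro mult_mono) auto
          also have "\<dots> \<le> D1 * K" unfolding D1_def by (rule max_mul_le1[OF K])
          finally show ?thesis by simp
        next
          case False
          then have rR: "r \<ge> R0" by simp
          have "(1+r) powr m * \<bar>g r\<bar> \<le> 2 powr m * (r powr m * \<bar>g r\<bar>)"
            using mult_right_mono[OF w2[OF order.trans[OF R0(1) rR]] abs_ge_zero[of "g r"]] by (simp add: mult.assoc)
          also have "\<dots> \<le> 2 powr m * (sqrt(2*X/lam) * K)" using far_g[OF rR] by (intro mult_left_mono) auto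
          also have "\<dots> \<le> D1 * K" unfolding D1_def by (rule max_mul_le2[OF K])
          finally show ?thesis .
        qed
    have b2: "(1+r) powr m * \<bar>g' r\<bar> \<le> D2 * K" if r: "r > 0" for r
        proof (cases "r \<le> R0")
          case True
          have "(1+r) powr m * \<bar>g' r\<bar> \<le> (1+R0) powr m * (c2 * K)"
            using wR[of r] True r g'b0[of r] by (intro mult_mono) auto
          also have "\<dots> \<le> D2 * K" unfolding D2_def by (rule max_mul_le1[OF K])
          finally show ?thesis by simp
        next
          case False
          then have rR: "r \<ge> R0" by simp
          have "(1+r) powr m * \<bar>g' r\<bar> \<le> 2 powr m * (r powr m * \<bar>g' r\<bar>)"
            using mult_right_mono[OF w2[OF order.trans[OF R0(1) rR]] abs_ge_zero[of "g' r"]] by (simp add: mult.assoc)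
          also have "\<dots> \<le> 2 powr m * ((sqrt X + \<bar>m\<bar> * sqrt(2*X/lam)) * K)" using far_g'[OF rR] by (intro mult_left_mono) auto
          also have "\<dots> \<le> D2 * K" unfolding D2_def by (rule max_mul_le2[OF K])
          finally show ?thesis .
        qed
    show "\<exists>g g' g''. continuous_on UNIV g
        \<and> (\<forall>r>0. (g has_real_derivative g' r) (at r) \<and> (g' has_real_derivative g'' r) (at r))
        \<and> (\<forall>r>0. g'' r + (real N - 1)/r * g' r + lam * g r = eta0 r)
        \<and> (\<forall>r\<ge>0. (1+r) powr m * \<bar>g r\<bar> \<le> D1 * K)
        \<and> (\<forall>r>0. (1+r) powr m * \<bar>g' r\<bar> \<le> D2 * K)"
      using gc dg dg' ode b1 b2 by blast
  qed
qed

lemma holder_pt2: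
  fixes f :: "'a::metric_space \<Rightarrow> real"
  assumes x: "x \<in> B" and z: "z \<in> B" and xz: "x \<noteq> z"
  shows "ereal (\<bar>f x\<bar> + \<bar>f x - f z\<bar> / dist x z powr \<alpha>) \<le> holder_norm \<alpha> B f"
proof -
  have 1: "ereal \<bar>f x\<bar> \<le> (SUP x\<in>B. ereal \<bar>f x\<bar>)" by (rule SUP_upper[OF x])
  have xzB: "(x, z) \<in> {(x, z). x \<in> B \<and> z \<in> B \<and> x \<noteq> z}" using x z xz by simp
  have 2: "ereal (\<bar>f x - f z\<bar> / dist x z powr \<alpha>) \<le>
     (SUP p\<in>{(x, z). x \<in> B \<and> z \<in> B \<and> x \<noteq> z}. ereal (\<bar>f (fst p) - f (snd p)\<bar> / (dist (fst p) (snd p) powr \<alpha>)))"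
    using SUP_upper[OF xzB, of "\<lambda>p. ereal (\<bar>f (fst p) - f (snd p)\<bar> / (dist (fst p) (snd p) powr \<alpha>))"] by simp
  have "ereal \<bar>f x\<bar> + ereal (\<bar>f x - f z\<bar> / dist x z powr \<alpha>) \<le> holder_norm \<alpha> B f"
    unfolding holder_norm_def by (rule add_mono[OF 1 2])
  then show ?thesis by simp
qed

lemma holder_upper:
  fixes f :: "'a::metric_space \<Rightarrow> real"
  assumes A: "\<And>x. x \<in> B \<Longrightarrow> \<bar>f x\<bar> \<le> A"
    and L: "\<And>x z. x \<in> B \<Longrightarrow> z \<in> B \<Longrightarrow> x \<noteq> z \<Longrightarrow> \<bar>f x - f z\<bar> / dist x z powr \<alpha> \<le> L"
  shows "holder_norm \<alpha> B f \<le> ereal (A + L)"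
proof -
  have 1: "(SUP x\<in>B. ereal \<bar>f x\<bar>) \<le> ereal A" by (rule SUP_least) (simp add: A)
  have 2: "(SUP p\<in>{(x, z). x \<in> B \<and> z \<in> B \<and> x \<noteq> z}. ereal (\<bar>f (fst p) - f (snd p)\<bar> / (dist (fst p) (snd p) powr \<alpha>))) \<le> ereal L"
    by (rule SUP_least) (auto simp: L)
  have "holder_norm \<alpha> B f \<le> ereal A + ereal L"
    unfolding holder_norm_def by (rule add_mono[OF 1 2])
  then show ?thesis by simp
qed

lemma hoelder_isCont:
  fixes W :: "'a::real_normed_vector \<Rightarrow> real"
  assumes h: "\<And>z. dist z x < 1 \<Longrightarrow> \<bar>W z - W x\<bar> \<le> K * dist z x powr \<alpha>" and \<alpha>: "\<alpha> > 0"
  shows "isCont W x"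
proof -
  have "((\<lambda>z. W z - W x) \<longlongrightarrow> 0) (at x)"
  proof (rule Lim_null_comparison[where g="\<lambda>z. K * dist z x powr \<alpha>"])
    show "\<forall>\<^sub>F z in at x. norm (W z - W x) \<le> K * dist z x powr \<alpha>"
      unfolding eventually_at by (rule exI[of _ 1]) (auto intro: h)
    have "((\<lambda>z. dist z x) \<longlongrightarrow> dist x x) (at x)" by (intro tendsto_intros)
    then have d0: "((\<lambda>z. dist z x) \<longlongrightarrow> 0) (at x)" by simp
    have "((\<lambda>z. dist z x powr \<alpha>) \<longlongrightarrow> 0) (at x)"
      by (rule tendsto_zero_powrI[OF d0 tendsto_const _ \<alpha>]) simp
    from tendsto_mult[OF tendsto_const[of K] this]
    show "((\<lambda>z. K * dist z x powr \<alpha>) \<longlongrightarrow> 0) (at x)" by simp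
  qed
  then show ?thesis unfolding isCont_def by (rule LIM_zero_cancel)
qed

lemma G_lip:
  fixes g g' :: "real \<Rightarrow> real" and m D1 D2 K a b :: real
  assumes gc: "continuous_on UNIV g"
    and dg: "\<And>r. r > 0 \<Longrightarrow> (g has_real_derivative g' r) (at r)"
    and b1: "\<And>r. r \<ge> 0 \<Longrightarrow> (1+r) powr m * \<bar>g r\<bar> \<le> D1 * K"
    and b2: "\<And>r. r > 0 \<Longrightarrow> (1+r) powr m * \<bar>g' r\<bar> \<le> D2 * K"
    and m: "m \<ge> 0" and a: "0 \<le> a" and ab: "a \<le> b"
  shows "\<bar>(1+b) powr m * g b - (1+a) powr m * g a\<bar> \<le> (m * (D1*K) + D2*K) * (b - a)"
proof (cases "a = b")
  case True then show ?thesis by simp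
next
  case False
  then have ab': "a < b" using ab by simp
  define G where "G = (\<lambda>r. (1+r) powr m * g r)"
  have dG: "(G has_real_derivative m * (1+x) powr (m-1) * g x + (1+x) powr m * g' x) (at x)" if x: "x > 0" for x
    unfolding G_def using x by (auto intro!: derivative_eq_intros dg)
  have "continuous_on {a..b} G" unfolding G_def using a
    by (intro continuous_intros continuous_on_subset[OF gc]) auto
  then have "\<exists>l z. a < z \<and> z < b \<and> (G has_real_derivative l) (at z) \<and> G b - G a = (b - a) * l"
  proof (rule MVT[OF ab'])
    fix x assume "a < x" "x < b"
    then have "x > 0" using a by linarith
    then show "G differentiable (at x)" using dG by (auto simp: real_differentiable_def)
  qed
  then obtain l z where z: "a < z" "z < b" and dz: "(G has_real_derivative l) (at z)" and eq: "G b - G a = (b - a) * l"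
    by blast
  have zp: "z > 0" using z a by simp
  have l: "l = m * (1+z) powr (m-1) * g z + (1+z) powr m * g' z"
    using DERIV_unique[OF dz dG[OF zp]] .
  have "\<bar>l\<bar> \<le> m * ((1+z) powr m * \<bar>g z\<bar>) + (1+z) powr m * \<bar>g' z\<bar>"
  proof -
    have "(1+z) powr (m-1) \<le> (1+z) powr m" using zp by (intro powr_mono) auto
    then have "m * (1+z) powr (m-1) * \<bar>g z\<bar> \<le> m * (1+z) powr m * \<bar>g z\<bar>"
      using m by (intro mult_right_mono mult_left_mono) auto
    moreover have "\<bar>l\<bar> \<le> m * (1+z) powr (m-1) * \<bar>g z\<bar> + (1+z) powr m * \<bar>g' z\<bar>"
      unfolding l using m by (auto simp: abs_mult intro: order.trans[OF abs_triangle_ineq])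
    ultimately show ?thesis by (simp add: mult.assoc)
  qed
  also have "\<dots> \<le> m * (D1*K) + D2*K"
    using b1[of z] b2[OF zp] zp m by (intro add_mono mult_left_mono) auto
  finally have lb: "\<bar>l\<bar> \<le> m * (D1*K) + D2*K" .
  have "\<bar>G b - G a\<bar> = (b - a) * \<bar>l\<bar>" using eq ab by (simp add: abs_mult)
  also have "\<dots> \<le> (b - a) * (m * (D1*K) + D2*K)" using lb ab by (intro mult_left_mono) auto
  finally show ?thesis by (simp add: G_def mult.commute)
qed

theorem lemma4:
  fixes lam \<alpha> \<beta> :: real
  assumes "DIM('a::euclidean_space) \<ge> 2" and "lam > 0" and "0 < \<alpha>" and "\<alpha> < 1"
    and "\<beta> > (real DIM('a) + 1) / 2"
  shows "\<exists>C::real. \<forall>\<eta>::'a \<Rightarrow> real. \<eta> \<in> Sbar \<alpha> \<beta> \<longrightarrow>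
     (\<exists>(h::'a \<Rightarrow> real) g g' g''. h \<in> Sbar \<alpha> ((real DIM('a) - 1) / 2)
        \<and> (\<forall>y. h y = g (norm y))
        \<and> (\<forall>r>0. (g has_real_derivative g' r) (at r) \<and> (g' has_real_derivative g'' r) (at r))
        \<and> (\<forall>y. y \<noteq> 0 \<longrightarrow>
              g'' (norm y) + (real DIM('a) - 1) / norm y * g' (norm y) + lam * g (norm y) = \<eta> y)
        \<and> wnorm \<alpha> ((real DIM('a) - 1) / 2) h \<le> ereal C * wnorm \<alpha> \<beta> \<eta>)"
proof -
  note N = assms(1) and lam = assms(2) and \<alpha> = assms(3,4) and \<beta> = assms(5)
  define m where "m = (real DIM('a) - 1) / 2"
  have m: "m \<ge> 0" using N by (simp add: m_def)
  obtain D1 D2 where D1: "D1 \<ge> 0" and D2: "D2 \<ge> 0" and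
    sol: "\<And>eta0 K. continuous_on UNIV eta0 \<Longrightarrow> K \<ge> 0 \<Longrightarrow>
     (\<forall>s\<ge>0. \<bar>eta0 s\<bar> \<le> K * (1+s) powr (-\<beta>)) \<Longrightarrow>
     (\<exists>g g' g''. continuous_on UNIV g
        \<and> (\<forall>r>0. (g has_real_derivative g' r) (at r) \<and> (g' has_real_derivative g'' r) (at r))
        \<and> (\<forall>r>0. g'' r + (real DIM('a) - 1)/r * g' r + lam * g r = eta0 r)
        \<and> (\<forall>r\<ge>0. (1+r) powr m * \<bar>g r\<bar> \<le> D1 * K)
        \<and> (\<forall>r>0. (1+r) powr m * \<bar>g' r\<bar> \<le> D2 * K))"
    using radial_solution[OF lam N \<beta>] unfolding m_def by blast
  define C where "C = D1 + 2 * (m * D1 + D2)"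
  obtain b :: 'a where b: "b \<in> Basis" using nonempty_Basis by blast
  have nb: "norm b = 1" using b by simp
  show ?thesis
  proof (rule exI[of _ C], intro allI impI)
    fix \<eta> :: "'a \<Rightarrow> real"
    assume "\<eta> \<in> Sbar \<alpha> \<beta>"
    then have rad: "radial \<eta>" and fin: "wnorm \<alpha> \<beta> \<eta> < \<infinity>" by (auto simp: Sbar_def)
    define W where "W = (\<lambda>x. (1 + norm x) powr \<beta> * \<eta> x)"
    have hW: "holder_norm \<alpha> (ball y 1) W \<le> wnorm \<alpha> \<beta> \<eta>" for y
      unfolding wnorm_def W_def by (rule SUP_upper) simp
    have two: "y \<in> ball y 1" "y + (1/2) *\<^sub>R b \<in> ball y 1" "y \<noteq> y + (1/2) *\<^sub>R b" for y :: 'a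
      using nb by (auto simp: dist_norm)
    have "ereal (\<bar>W 0\<bar> + \<bar>W 0 - W (0 + (1/2) *\<^sub>R b)\<bar> / dist 0 (0 + (1/2) *\<^sub>R b) powr \<alpha>) \<le> wnorm \<alpha> \<beta> \<eta>"
      using holder_pt2[OF two(1)[of 0] two(2)[of 0] two(3)[of 0], of W \<alpha>] hW[of 0] by (rule order.trans)
    moreover have "(0::ereal) \<le> ereal (\<bar>W 0\<bar> + \<bar>W 0 - W (0 + (1/2) *\<^sub>R b)\<bar> / dist 0 (0 + (1/2) *\<^sub>R b) powr \<alpha>)" by simp
    ultimately have wpos: "0 \<le> wnorm \<alpha> \<beta> \<eta>" by (rule order.trans[rotated])
    obtain K where Keq: "wnorm \<alpha> \<beta> \<eta> = ereal K" using wpos fin by (cases "wnorm \<alpha> \<beta> \<eta>") auto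
    have K: "K \<ge> 0" using wpos Keq by simp
    have Wpt: "\<bar>W x\<bar> + \<bar>W x - W z\<bar> / dist x z powr \<alpha> \<le> K" if "z \<in> ball x 1" "x \<noteq> z" for x z
    proof -
      have "ereal (\<bar>W x\<bar> + \<bar>W x - W z\<bar> / dist x z powr \<alpha>) \<le> holder_norm \<alpha> (ball x 1) W"
        using holder_pt2[of x "ball x 1" z W \<alpha>] that by auto
      also have "\<dots> \<le> ereal K" using hW[of x] Keq by simp
      finally have "ereal (\<bar>W x\<bar> + \<bar>W x - W z\<bar> / dist x z powr \<alpha>) \<le> ereal K" .
      then show ?thesis by simp
    qed
    have WK: "\<bar>W x\<bar> \<le> K" for x
    proof -
      have "\<bar>W x\<bar> + \<bar>W x - W (x + (1/2) *\<^sub>R b)\<bar> / dist x (x + (1/2) *\<^sub>R b) powr \<alpha> \<le> K"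
        using Wpt two[of x] by auto
      moreover have "0 \<le> \<bar>W x - W (x + (1/2) *\<^sub>R b)\<bar> / dist x (x + (1/2) *\<^sub>R b) powr \<alpha>" by simp
      ultimately show ?thesis by linarith
    qed
    have WH: "\<bar>W z - W x\<bar> \<le> K * dist z x powr \<alpha>" if "dist z x < 1" for x z
    proof (cases "z = x")
      case True then show ?thesis by simp
    next
      case False
      have zb: "z \<in> ball x 1" using that by (simp add: dist_commute)
      have "\<bar>W x - W z\<bar> / dist x z powr \<alpha> \<le> K" using Wpt[OF zb] False abs_ge_zero[of "W x"]
        by fastforce
      moreover have "dist x z powr \<alpha> > 0" using False by simp
      ultimately show ?thesis by (simp add: divide_le_eq dist_commute abs_minus_commute)
    qed
    have Wc: "continuous_on UNIV W"
      by (rule continuous_at_imp_continuous_on) (auto intro!: hoelder_isCont[OF WH \<alpha>(1)])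
    define eta0 where "eta0 = (\<lambda>s. \<eta> (s *\<^sub>R b))"
    have eta0W: "eta0 s = W (s *\<^sub>R b) / (1 + \<bar>s\<bar>) powr \<beta>" for s
    proof -
      have "(1 + \<bar>s\<bar>) powr \<beta> > 0" by simp
      then show ?thesis by (simp add: eta0_def W_def nb)
    qed
    have eta_rad: "\<eta> y = eta0 (norm y)" for y
      unfolding eta0_def by (rule rad[unfolded radial_def, rule_format]) (simp add: nb)
    have e0c: "continuous_on UNIV eta0"
    proof -
      have "continuous_on UNIV (\<lambda>s. W (s *\<^sub>R b))"
        by (rule continuous_on_compose2[OF Wc]) (auto intro!: continuous_intros)
      then have "continuous_on UNIV (\<lambda>s. W (s *\<^sub>R b) / (1 + \<bar>s\<bar>) powr \<beta>)"
        by (auto intro!: continuous_intros simp: add_pos_nonneg)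
      then show ?thesis by (simp add: eta0W[abs_def])
    qed
    have e0b: "\<forall>s\<ge>0. \<bar>eta0 s\<bar> \<le> K * (1+s) powr (-\<beta>)"
    proof (intro allI impI)
      fix s :: real assume s: "s \<ge> 0"
      have "\<bar>eta0 s\<bar> = \<bar>W (s *\<^sub>R b)\<bar> / (1 + s) powr \<beta>" using s by (simp add: eta0W abs_div)
      also have "\<dots> \<le> K / (1+s) powr \<beta>" using WK s by (intro divide_right_mono) auto
      also have "\<dots> = K * (1+s) powr (-\<beta>)" using s by (simp add: powr_minus divide_inverse)
      finally show "\<bar>eta0 s\<bar> \<le> K * (1+s) powr (-\<beta>)" .
    qed
    obtain g g' g'' where gc: "continuous_on UNIV g"
      and dg: "\<forall>r>0. (g has_real_derivative g' r) (at r) \<and> (g' has_real_derivative g'' r) (at r)"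
      and ode: "\<forall>r>0. g'' r + (real DIM('a) - 1)/r * g' r + lam * g r = eta0 r"
      and b1: "\<forall>r\<ge>0. (1+r) powr m * \<bar>g r\<bar> \<le> D1 * K"
      and b2: "\<forall>r>0. (1+r) powr m * \<bar>g' r\<bar> \<le> D2 * K"
      using sol[OF e0c K e0b] by blast
    define h where "h = (\<lambda>y::'a. g (norm y))"
    define L where "L = m * (D1*K) + D2*K"
    have L: "L \<ge> 0" using m D1 D2 K by (simp add: L_def)
    have Glip: "\<bar>(1+s) powr m * g s - (1+t) powr m * g t\<bar> \<le> L * \<bar>s - t\<bar>" if "s \<ge> 0" "t \<ge> 0" for s t
    proof (cases "t \<le> s")
      case True
      then show ?thesis using G_lip[OF gc _ _ _ m, of g' D1 K D2 t s] dg b1 b2 that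
        by (auto simp: L_def)
    next
      case False
      then show ?thesis using G_lip[OF gc _ _ _ m, of g' D1 K D2 s t] dg b1 b2 that
        by (auto simp: L_def abs_minus_commute)
    qed
    define H where "H = (\<lambda>x::'a. (1 + norm x) powr m * h x)"
    have hb: "holder_norm \<alpha> (ball y 1) H \<le> ereal (D1*K + 2*L)" for y
    proof (rule holder_upper)
      fix x assume "x \<in> ball y 1"
      show "\<bar>H x\<bar> \<le> D1 * K" using b1 by (simp add: H_def h_def abs_mult)
    next
      fix x z assume x: "x \<in> ball y 1" and z: "z \<in> ball y 1" and xz: "x \<noteq> z"
      define d where "d = dist x z"
      have d: "d > 0" "d < 2" using xz x z dist_triangle[of x z y]
        by (auto simp: d_def dist_commute)
      have "\<bar>H x - H z\<bar> \<le> L * \<bar>norm x - norm z\<bar>"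
        using Glip[of "norm x" "norm z"] by (simp add: H_def h_def)
      also have "\<dots> \<le> L * d" using L by (intro mult_left_mono) (auto simp: d_def dist_norm norm_triangle_ineq3)
      finally have hd: "\<bar>H x - H z\<bar> \<le> L * d" .
      have e0: "d powr (1-\<alpha>) = d / d powr \<alpha>" using d by (simp add: powr_diff)
      have p1: "d powr (1 - \<alpha>) \<le> 2 powr (1 - \<alpha>)" using d \<alpha> by (intro powr_mono2) auto
      have p2: "2 powr (1 - \<alpha>) \<le> 2" using powr_mono[of "1-\<alpha>" 1 2] \<alpha> by simp
      have "\<bar>H x - H z\<bar> / d powr \<alpha> \<le> L * d / d powr \<alpha>" using hd d by (intro divide_right_mono) auto
      also have "\<dots> = L * d powr (1 - \<alpha>)" by (simp add: e0)
      also have "\<dots> \<le> L * 2" using L p1 p2 by (intro mult_left_mono) auto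
      finally show "\<bar>H x - H z\<bar> / dist x z powr \<alpha> \<le> 2 * L" by (simp add: d_def mult.commute)
    qed
    have wh: "wnorm \<alpha> m h \<le> ereal (D1*K + 2*L)"
      unfolding wnorm_def by (rule SUP_least) (use hb in \<open>simp add: H_def\<close>)
    have CK: "D1*K + 2*L = C * K" by (simp add: C_def L_def algebra_simps)
    show "\<exists>(h::'a \<Rightarrow> real) g g' g''. h \<in> Sbar \<alpha> ((real DIM('a) - 1) / 2)
        \<and> (\<forall>y. h y = g (norm y))
        \<and> (\<forall>r>0. (g has_real_derivative g' r) (at r) \<and> (g' has_real_derivative g'' r) (at r))
        \<and> (\<forall>y. y \<noteq> 0 \<longrightarrow>
              g'' (norm y) + (real DIM('a) - 1) / norm y * g' (norm y) + lam * g (norm y) = \<eta> y)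
        \<and> wnorm \<alpha> ((real DIM('a) - 1) / 2) h \<le> ereal C * wnorm \<alpha> \<beta> \<eta>"
    proof (rule exI[of _ h], rule exI[of _ g], rule exI[of _ g'], rule exI[of _ g''], intro conjI)
      show "h \<in> Sbar \<alpha> ((real DIM('a) - 1) / 2)"
        unfolding Sbar_def radial_def m_def[symmetric] using wh by (auto simp: h_def)
      show "\<forall>y. h y = g (norm y)" by (simp add: h_def)
      show "\<forall>r>0. (g has_real_derivative g' r) (at r) \<and> (g' has_real_derivative g'' r) (at r)" by (rule dg)
      show "\<forall>y. y \<noteq> 0 \<longrightarrow>
              g'' (norm y) + (real DIM('a) - 1) / norm y * g' (norm y) + lam * g (norm y) = \<eta> y"
        using ode eta_rad by simp
      show "wnorm \<alpha> ((real DIM('a) - 1) / 2) h \<le> ereal C * wnorm \<alpha> \<beta> \<eta>"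
        using wh unfolding Keq m_def[symmetric] CK by simp
    qed
  qed
qed

end
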